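(* Let $\|\cdot\|$ be a norm on $\mathbb{M}_n$ and let $\|\cdot\|_*$ be its dual norm. The closed unit ball of $\|\cdot\|_*$ is $C^*$-convex if and only if $\|\cdot\|$ is an $L$-norm.
   Context: $\mathbb{M}_n$ is the algebra of complex $n\times n$ matrices with identity $I$. The dual norm is $\|Y\|_*=\sup\{|\mathrm{Tr}(Y^*X)| : X\in\mathbb{M}_n,\ \|X\|\le 1\}$. A subset $\mathscr{K}\subseteq\mathbb{M}_n$ is $C^*$-convex if whenever $A_1,\dots,A_k\in\mathscr{K}$ and $C_1,\dots,C_k\in\mathbb{M}_n$ satisfy $\sum_{i=1}^k C_i^*C_i=I$, then $\sum_{i=1}^k C_i^*A_iC_i\in\mathscr{K}$. A norm $\|\cdot\|$ is an $L$-norm if $\sum_{i=1}^k\|C_iXC_i^*\|\le\|X\|$ for all $k$, all $X$ and all $C_1,\dots,C_k$ with $\sum_{i=1}^k C_i^*C_i=I$. *)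

theory Defs
  imports "HOL-Analysis.Analysis"
begin

type_synonym 'n cmat = "complex^'n^'n"

definition mat_adj :: "'n::finite cmat \<Rightarrow> 'n cmat" where
  "mat_adj A = (\<chi> i j. cnj (A $ j $ i))"

definition mat_trace :: "'n::finite cmat \<Rightarrow> complex" where
  "mat_trace A = (\<Sum>i\<in>UNIV. A $ i $ i)"

definition mat_cscale :: "complex \<Rightarrow> 'n::finite cmat \<Rightarrow> 'n cmat" where
  "mat_cscale c A = (\<chi> i j. c * A $ i $ j)"

definition is_matrix_norm :: "('n::finite cmat \<Rightarrow> real) \<Rightarrow> bool" where
  "is_matrix_norm N \<longleftrightarrow>
     (\<forall>X. N X \<ge> 0) \<and> (\<forall>X. N X = 0 \<longleftrightarrow> X = 0) \<and>
     (\<forall>X Y. N (X + Y) \<le> N X + N Y) \<and>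
     (\<forall>c X. N (mat_cscale c X) = cmod c * N X)"

definition dual_norm :: "('n::finite cmat \<Rightarrow> real) \<Rightarrow> 'n cmat \<Rightarrow> real" where
  "dual_norm N Y = Sup {cmod (mat_trace (mat_adj Y ** X)) | X. N X \<le> 1}"

definition C_star_convex :: "'n::finite cmat set \<Rightarrow> bool" where
  "C_star_convex K \<longleftrightarrow>
     (\<forall>(k::nat) (A::nat \<Rightarrow> 'n cmat) (C::nat \<Rightarrow> 'n cmat).
        (\<forall>i<k. A i \<in> K) \<and> (\<Sum>i<k. mat_adj (C i) ** C i) = mat 1 \<longrightarrow>
        (\<Sum>i<k. mat_adj (C i) ** A i ** C i) \<in> K)"

definition is_L_norm :: "('n::finite cmat \<Rightarrow> real) \<Rightarrow> bool" where
  "is_L_norm N \<longleftrightarrow>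
     (\<forall>(k::nat) (X::'n cmat) (C::nat \<Rightarrow> 'n cmat).
        (\<Sum>i<k. mat_adj (C i) ** C i) = mat 1 \<longrightarrow>
        (\<Sum>i<k. N (C i ** X ** mat_adj (C i))) \<le> N X)"

end

theory Submission
  imports Defs
begin

lemma adj_mult: "mat_adj (A ** B) = mat_adj B ** mat_adj (A::'n::finite cmat)"
  by (simp add: mat_adj_def matrix_matrix_mult_def vec_eq_iff mult.commute)

lemma adj_adj: "mat_adj (mat_adj A) = (A::'n::finite cmat)"
  by (simp add: mat_adj_def vec_eq_iff)

lemma adj_sum: "mat_adj (\<Sum>i\<in>S. f i) = (\<Sum>i\<in>S. mat_adj (f i::'n::finite cmat))"
  by (simp add: mat_adj_def vec_eq_iff sum_component)

lemma trace_comm: "mat_trace (A ** B) = mat_trace (B ** (A::'n::finite cmat))"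
  unfolding mat_trace_def matrix_matrix_mult_def
  apply simp
  apply (subst sum.swap)
  by (simp add: mult.commute)

lemma trace_sum: "mat_trace (\<Sum>i\<in>S. f i) = (\<Sum>i\<in>S. mat_trace (f i::'n::finite cmat))"
  unfolding mat_trace_def apply (simp add: sum_component)
  by (rule sum.swap)

lemma mult_sum_left: "(\<Sum>i\<in>S. f i) ** X = (\<Sum>i\<in>S. f i ** (X::'n::finite cmat))"
  apply (simp add: matrix_matrix_mult_def vec_eq_iff sum_component sum_distrib_right)
  apply (intro allI)
  apply (rule sum.swap)
  done

lemma trace_cscale: "mat_trace (mat_adj Y ** mat_cscale c X) = c * mat_trace (mat_adj Y ** (X::'n::finite cmat))"
  unfolding mat_trace_def matrix_matrix_mult_def mat_cscale_def
  by (simp add: sum_distrib_left algebra_simps)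

lemma cscale_real: "mat_cscale (complex_of_real r) X = r *\<^sub>R (X::'n::finite cmat)"
  unfolding mat_cscale_def vec_eq_iff
  by (simp add: scaleR_conv_of_real[where 'a=complex])

lemma re_trace_inner: "Re (mat_trace (mat_adj Y ** X)) = Y \<bullet> (X::'n::finite cmat)"
proof -
  have "Re (mat_trace (mat_adj Y ** X)) = (\<Sum>i\<in>UNIV. \<Sum>k\<in>UNIV. Y$k$i \<bullet> X$k$i)"
    unfolding mat_trace_def matrix_matrix_mult_def mat_adj_def inner_complex_def by (simp add: Re_sum)
  also have "\<dots> = (\<Sum>k\<in>UNIV. \<Sum>i\<in>UNIV. Y$k$i \<bullet> X$k$i)" by (rule sum.swap)
  also have "\<dots> = Y \<bullet> X" by (simp add: inner_vec_def)
  finally show ?thesis .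
qed

lemma phase: "\<exists>c. cmod c = 1 \<and> c * z = complex_of_real (cmod z)"
proof (cases "z = 0")
  case True then show ?thesis by (intro exI[of _ 1]) simp
next
  case False
  show ?thesis
    apply (intro exI[of _ "cnj z / cmod z"])
    using False by (simp add: norm_divide complex_norm_square[symmetric] field_simps power2_eq_square)
qed

lemma trace_identity:
  "mat_trace (mat_adj (\<Sum>i<k. mat_adj (C i) ** A i ** C i) ** X)
   = (\<Sum>i<k. mat_trace (mat_adj (A i) ** (C i ** X ** mat_adj (C i::'n::finite cmat))))"
proof -
  have "mat_trace (mat_adj (\<Sum>i<k. mat_adj (C i) ** A i ** C i) ** X)
     = (\<Sum>i<k. mat_trace (mat_adj (C i) ** mat_adj (A i) ** C i ** X))"
    by (simp add: adj_sum adj_mult adj_adj mult_sum_left trace_sum matrix_mul_assoc)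
  also have "\<dots> = (\<Sum>i<k. mat_trace (mat_adj (A i) ** (C i ** X ** mat_adj (C i))))"
  proof (rule sum.cong[OF refl])
    fix x
    have "mat_trace (mat_adj (C x) ** mat_adj (A x) ** C x ** X)
       = mat_trace (mat_adj (C x) ** (mat_adj (A x) ** C x ** X))" by (simp add: matrix_mul_assoc)
    also have "\<dots> = mat_trace ((mat_adj (A x) ** C x ** X) ** mat_adj (C x))" by (rule trace_comm)
    also have "\<dots> = mat_trace (mat_adj (A x) ** (C x ** X ** mat_adj (C x)))" by (simp add: matrix_mul_assoc)
    finally show "mat_trace (mat_adj (C x) ** mat_adj (A x) ** C x ** X)
       = mat_trace (mat_adj (A x) ** (C x ** X ** mat_adj (C x)))" .
  qed
  finally show ?thesis .
qed

lemma N_cscale: "is_matrix_norm N \<Longrightarrow> N (mat_cscale c X) = cmod c * N X"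
  unfolding is_matrix_norm_def by blast

lemma N_scaleR: "is_matrix_norm N \<Longrightarrow> N (r *\<^sub>R X) = \<bar>r\<bar> * N X"
  using N_cscale[of N "complex_of_real r" X] by (simp add: cscale_real)

lemma N_nonneg: "is_matrix_norm N \<Longrightarrow> N X \<ge> 0"
  unfolding is_matrix_norm_def by blast

lemma N_zero: "is_matrix_norm N \<Longrightarrow> N X = 0 \<longleftrightarrow> X = 0"
  unfolding is_matrix_norm_def by blast

lemma N_triangle: "is_matrix_norm N \<Longrightarrow> N (X + Y) \<le> N X + N Y"
  unfolding is_matrix_norm_def by blast

lemma N_convex:
  assumes "is_matrix_norm (N::'n::finite cmat \<Rightarrow> real)"
  shows "convex_on UNIV N"
  unfolding convex_on_def
proof (intro conjI ballI allI impI)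
  fix x y :: "'n cmat" and u v :: real
  assume "0 \<le> u" "0 \<le> v" "u + v = 1"
  have "N (u *\<^sub>R x + v *\<^sub>R y) \<le> N (u *\<^sub>R x) + N (v *\<^sub>R y)" by (rule N_triangle[OF assms])
  also have "\<dots> = u * N x + v * N y" using N_scaleR[OF assms] \<open>0 \<le> u\<close> \<open>0 \<le> v\<close> by simp
  finally show "N (u *\<^sub>R x + v *\<^sub>R y) \<le> u * N x + v * N y" .
qed simp

lemma N_cont:
  assumes "is_matrix_norm (N::'n::finite cmat \<Rightarrow> real)"
  shows "continuous_on UNIV N"
  by (rule convex_on_continuous[OF open_UNIV N_convex[OF assms]])

lemma N_lower:
  assumes "is_matrix_norm (N::'n::finite cmat \<Rightarrow> real)"
  shows "\<exists>c>0. \<forall>X. c * norm X \<le> N X"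
proof -
  have ne: "sphere (0::'n cmat) 1 \<noteq> {}"
    by (simp add: sphere_def) (metis norm_Basis SOME_Basis norm_minus_cancel)
  obtain x0 where x0: "x0 \<in> sphere (0::'n cmat) 1" "\<forall>y\<in>sphere 0 1. N x0 \<le> N y"
    using continuous_attains_inf[OF compact_sphere ne continuous_on_subset[OF N_cont[OF assms]]] by blast
  have "x0 \<noteq> 0" using x0(1) by auto
  then have pos: "N x0 > 0" using N_zero[OF assms] N_nonneg[OF assms] by (metis less_eq_real_def)
  show ?thesis
  proof (intro exI[of _ "N x0"] conjI allI pos)
    fix X :: "'n cmat"
    show "N x0 * norm X \<le> N X"
    proof (cases "X = 0")
      case True then show ?thesis using N_nonneg[OF assms] by simp
    next
      case False
      then have "(1 / norm X) *\<^sub>R X \<in> sphere 0 1" by simp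
      then have "N x0 \<le> N ((1 / norm X) *\<^sub>R X)" using x0(2) by blast
      also have "\<dots> = N X / norm X" using N_scaleR[OF assms] by simp
      finally show ?thesis using False by (simp add: field_simps)
    qed
  qed
qed

lemma trace_phase:
  "\<exists>c. cmod c = 1 \<and> cmod (mat_trace (mat_adj Y ** X)) = Y \<bullet> mat_cscale c (X::'n::finite cmat)"
proof -
  obtain c where c: "cmod c = 1" "c * mat_trace (mat_adj Y ** X) = complex_of_real (cmod (mat_trace (mat_adj Y ** X)))"
    using phase by blast
  have "Y \<bullet> mat_cscale c X = Re (mat_trace (mat_adj Y ** mat_cscale c X))" by (simp add: re_trace_inner)
  also have "\<dots> = cmod (mat_trace (mat_adj Y ** X))" by (simp add: trace_cscale c(2))
  finally show ?thesis using c(1) by auto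
qed

lemma dual_bdd:
  assumes "is_matrix_norm (N::'n::finite cmat \<Rightarrow> real)"
  shows "bdd_above {cmod (mat_trace (mat_adj Y ** X)) | X. N X \<le> 1}"
proof -
  obtain c0 where c0: "c0 > 0" "\<forall>X. c0 * norm X \<le> N X" using N_lower[OF assms] by blast
  show ?thesis
  proof (rule bdd_aboveI, safe)
    fix X :: "'n cmat" assume X: "N X \<le> 1"
    obtain c where c: "cmod c = 1" "cmod (mat_trace (mat_adj Y ** X)) = Y \<bullet> mat_cscale c X"
      using trace_phase by blast
    have "N (mat_cscale c X) \<le> 1" using X c(1) N_cscale[OF assms] by simp
    then have "c0 * norm (mat_cscale c X) \<le> 1" using c0(2) order_trans by blast
    then have nb: "norm (mat_cscale c X) \<le> 1 / c0" using c0(1) by (simp add: field_simps mult.commute)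
    have "Y \<bullet> mat_cscale c X \<le> norm Y * norm (mat_cscale c X)" by (rule norm_cauchy_schwarz)
    also have "\<dots> \<le> norm Y * (1 / c0)" by (rule mult_left_mono[OF nb norm_ge_zero])
    finally show "cmod (mat_trace (mat_adj Y ** X)) \<le> norm Y * (1 / c0)" using c(2) by simp
  qed
qed

lemma dual_upper:
  assumes "is_matrix_norm (N::'n::finite cmat \<Rightarrow> real)" "N X \<le> 1"
  shows "cmod (mat_trace (mat_adj Y ** X)) \<le> dual_norm N Y"
  unfolding dual_norm_def
  by (rule cSup_upper[OF _ dual_bdd[OF assms(1)]]) (use assms(2) in blast)

lemma dual_nonneg:
  assumes "is_matrix_norm (N::'n::finite cmat \<Rightarrow> real)"
  shows "0 \<le> dual_norm N Y"
proof -
  have "N 0 \<le> 1" using N_zero[OF assms, of 0] by simp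
  from dual_upper[OF assms this, of Y] show ?thesis by (simp add: matrix_matrix_mult_def mat_trace_def)
qed

lemma dual_ineq:
  assumes "is_matrix_norm (N::'n::finite cmat \<Rightarrow> real)"
  shows "cmod (mat_trace (mat_adj Y ** X)) \<le> dual_norm N Y * N X"
proof (cases "X = 0")
  case True then show ?thesis using N_zero[OF assms, of 0] by (simp add: matrix_matrix_mult_def mat_trace_def)
next
  case False
  have pos: "N X > 0" using N_zero[OF assms, of X] N_nonneg[OF assms, of X] False by linarith
  have "N ((1 / N X) *\<^sub>R X) = \<bar>1 / N X\<bar> * N X" by (rule N_scaleR[OF assms])
  then have "N ((1 / N X) *\<^sub>R X) = 1" using pos by simp
  then have "cmod (mat_trace (mat_adj Y ** ((1 / N X) *\<^sub>R X))) \<le> dual_norm N Y"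
    by (intro dual_upper[OF assms]) simp
  moreover have "mat_trace (mat_adj Y ** ((1 / N X) *\<^sub>R X)) = complex_of_real (1 / N X) * mat_trace (mat_adj Y ** X)"
    unfolding cscale_real[symmetric] by (rule trace_cscale)
  ultimately have "cmod (complex_of_real (1 / N X) * mat_trace (mat_adj Y ** X)) \<le> dual_norm N Y"
    by (simp only:)
  then have "cmod (complex_of_real (1 / N X)) * cmod (mat_trace (mat_adj Y ** X)) \<le> dual_norm N Y"
    by (simp only: norm_mult)
  moreover have "cmod (complex_of_real (1 / N X)) = 1 / N X" using pos by (simp only: norm_of_real) simp
  ultimately have "(1 / N X) * cmod (mat_trace (mat_adj Y ** X)) \<le> dual_norm N Y" by simp
  then show ?thesis using pos by (simp add: divide_le_eq mult.commute)
qed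

lemma dual_le1:
  assumes "is_matrix_norm (N::'n::finite cmat \<Rightarrow> real)"
    and "\<And>X. N X \<le> 1 \<Longrightarrow> cmod (mat_trace (mat_adj Y ** X)) \<le> 1"
  shows "dual_norm N Y \<le> 1"
  unfolding dual_norm_def
proof (rule cSup_least)
  have "N 0 \<le> 1" using N_zero[OF assms(1), of 0] by simp
  then show "{cmod (mat_trace (mat_adj Y ** X)) | X. N X \<le> 1} \<noteq> {}" by blast
qed (use assms(2) in blast)

lemma re1_cmod: "Re t = 1 \<Longrightarrow> cmod t \<le> 1 \<Longrightarrow> t = 1"
  by (metis abs_Re_le_cmod abs_le_D1 complex_Re_le_cmod complex_eq_iff cmod_eq_Re dual_order.antisym Re_complex_of_real one_complex.simps(1) one_complex.simps(2) power2_eq_square cmod_power2 add_cancel_left_right mult_eq_0_iff)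

lemma norming:
  assumes nN: "is_matrix_norm (N::'n::finite cmat \<Rightarrow> real)"
  shows "\<exists>Y. dual_norm N Y \<le> 1 \<and> mat_trace (mat_adj Y ** Z) = complex_of_real (N Z)"
proof (cases "Z = 0")
  case True
  have "dual_norm N 0 \<le> 1"
    by (rule dual_le1[OF nN]) (simp add: mat_adj_def mat_trace_def matrix_matrix_mult_def)
  moreover have "N Z = 0" using True N_zero[OF nN] by simp
  ultimately show ?thesis using True
    by (intro exI[of _ 0]) (simp add: mat_adj_def mat_trace_def matrix_matrix_mult_def)
next
  case False
  have pos: "N Z > 0" using N_zero[OF nN, of Z] N_nonneg[OF nN, of Z] False by linarith
  define W where "W = (1 / N Z) *\<^sub>R Z"
  have NW: "N W = 1" unfolding W_def using N_scaleR[OF nN] pos by simp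
  define B where "B = {X::'n cmat. N X \<le> 1}"
  have cont: "continuous_on UNIV N" by (rule N_cont[OF nN])
  have convB: "convex B"
    unfolding convex_def B_def
  proof (intro ballI allI impI, simp only: mem_Collect_eq)
    fix x y :: "'n cmat" and u v :: real
    assume h: "N x \<le> 1" "N y \<le> 1" "0 \<le> u" "0 \<le> v" "u + v = 1"
    have "N (u *\<^sub>R x + v *\<^sub>R y) \<le> N (u *\<^sub>R x) + N (v *\<^sub>R y)" by (rule N_triangle[OF nN])
    also have "\<dots> = u * N x + v * N y" using N_scaleR[OF nN] h by simp
    also have "\<dots> \<le> u * 1 + v * 1" using h by (intro add_mono mult_left_mono) auto
    finally show "N (u *\<^sub>R x + v *\<^sub>R y) \<le> 1" using h by simp
  qed
  have closedB: "closed B" unfolding B_def by (rule closed_Collect_le[OF cont continuous_on_const])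
  have openS: "open {X::'n cmat. N X < 1}" by (rule open_Collect_less[OF cont continuous_on_const])
  have "{X. N X < 1} \<subseteq> interior B"
    by (rule interior_maximal[OF _ openS]) (auto simp: B_def)
  moreover have "0 \<in> {X::'n cmat. N X < 1}" using N_zero[OF nN, of 0] by simp
  ultimately have "0 \<in> interior B" by blast
  then have int_ne: "interior B \<noteq> {}" by blast
  have WnB: "W \<notin> interior B"
  proof
    assume "W \<in> interior B"
    then obtain e where e: "e > 0" "ball W e \<subseteq> B" using mem_interior by blast
    have Wne: "W \<noteq> 0" using NW N_zero[OF nN, of 0] by auto
    define t where "t = e / (2 * norm W)"
    have t: "t > 0" unfolding t_def using e Wne by simp
    have "dist W ((1 + t) *\<^sub>R W) = t * norm W"
      using t by (simp add: dist_norm algebra_simps)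
    also have "\<dots> = e / 2" unfolding t_def using Wne by simp
    also have "\<dots> < e" using e by simp
    finally have "(1 + t) *\<^sub>R W \<in> B" using e(2) by auto
    moreover have "N ((1 + t) *\<^sub>R W) = 1 + t" using N_scaleR[OF nN] NW t by simp
    ultimately show False using t unfolding B_def by simp
  qed
  have relB: "rel_interior B = interior B" by (rule rel_interior_nonempty_interior[OF int_ne])
  have clB: "closure B = B" by (rule closure_closed[OF closedB])
  have WB: "W \<in> closure B" using NW unfolding clB unfolding B_def by auto
  obtain a where a: "a \<noteq> 0" "\<And>y. y \<in> closure B \<Longrightarrow> a \<bullet> W \<le> a \<bullet> y"
      "\<And>y. y \<in> rel_interior B \<Longrightarrow> a \<bullet> W < a \<bullet> y"
    using supporting_hyperplane_relative_frontier[OF convB WB] WnB relB by metis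
  have "a \<bullet> W < a \<bullet> 0" using a(3)[of 0] relB \<open>0 \<in> interior B\<close> by simp
  then have s: "- (a \<bullet> W) > 0" by simp
  define s where "s = - (a \<bullet> W)"
  define Y where "Y = (- 1 / s) *\<^sub>R a"
  have spos: "s > 0" using s s_def by simp
  have YX: "Y \<bullet> X \<le> 1" if "N X \<le> 1" for X
  proof -
    have "X \<in> closure B" using that unfolding clB unfolding B_def by auto
    then have "a \<bullet> W \<le> a \<bullet> X" by (rule a(2))
    then have "- (a \<bullet> X) \<le> s" unfolding s_def by simp
    then show ?thesis unfolding Y_def using spos by (simp add: field_simps)
  qed
  have YW: "Y \<bullet> W = 1" unfolding Y_def s_def using s by simp
  have dY: "dual_norm N Y \<le> 1"
  proof (rule dual_le1[OF nN])
    fix X :: "'n cmat" assume X: "N X \<le> 1"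
    obtain c where c: "cmod c = 1" "cmod (mat_trace (mat_adj Y ** X)) = Y \<bullet> mat_cscale c X"
      using trace_phase by blast
    have "N (mat_cscale c X) \<le> 1" using X c(1) N_cscale[OF nN] by simp
    then show "cmod (mat_trace (mat_adj Y ** X)) \<le> 1" using c(2) YX by simp
  qed
  have "Re (mat_trace (mat_adj Y ** W)) = 1" using YW by (simp add: re_trace_inner)
  moreover have "cmod (mat_trace (mat_adj Y ** W)) \<le> 1"
    using dual_ineq[OF nN, of Y W] dY NW by simp
  ultimately have TW: "mat_trace (mat_adj Y ** W) = 1" by (rule re1_cmod)
  have "Z = mat_cscale (complex_of_real (N Z)) W"
    unfolding W_def cscale_real using pos by simp
  then have "mat_trace (mat_adj Y ** Z) = complex_of_real (N Z)"
    using trace_cscale[of Y "complex_of_real (N Z)" W] TW by simp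
  then show ?thesis using dY by blast
qed

theorem theorem2p5:
  fixes N :: "'n::finite cmat \<Rightarrow> real"
  assumes "is_matrix_norm N"
  shows "C_star_convex {Y. dual_norm N Y \<le> 1} \<longleftrightarrow> is_L_norm N"
proof
  assume cs: "C_star_convex {Y. dual_norm N Y \<le> 1}"
  obtain Yf where Yf: "\<And>Z. dual_norm N (Yf Z) \<le> 1 \<and> mat_trace (mat_adj (Yf Z) ** Z) = complex_of_real (N Z)"
    using norming[OF assms] by metis
  show "is_L_norm N"
    unfolding is_L_norm_def
  proof (intro allI impI)
    fix k :: nat and X :: "'n cmat" and C :: "nat \<Rightarrow> 'n cmat"
    assume sC: "(\<Sum>i<k. mat_adj (C i) ** C i) = mat 1"
    define A where "A i = Yf (C i ** X ** mat_adj (C i))" for i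
    define Y where "Y = (\<Sum>i<k. mat_adj (C i) ** A i ** C i)"
    have "\<forall>i<k. A i \<in> {Y. dual_norm N Y \<le> 1}" unfolding A_def using Yf by simp
    then have "Y \<in> {Y. dual_norm N Y \<le> 1}" using cs sC unfolding C_star_convex_def Y_def by blast
    then have dY: "dual_norm N Y \<le> 1" by simp
    have "mat_trace (mat_adj Y ** X) = (\<Sum>i<k. mat_trace (mat_adj (A i) ** (C i ** X ** mat_adj (C i))))"
      unfolding Y_def by (rule trace_identity)
    also have "\<dots> = (\<Sum>i<k. complex_of_real (N (C i ** X ** mat_adj (C i))))"
      unfolding A_def using Yf by simp
    also have "\<dots> = complex_of_real (\<Sum>i<k. N (C i ** X ** mat_adj (C i)))" by simp
    finally have eq: "mat_trace (mat_adj Y ** X) = complex_of_real (\<Sum>i<k. N (C i ** X ** mat_adj (C i)))" .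
    have nn: "(\<Sum>i<k. N (C i ** X ** mat_adj (C i))) \<ge> 0" by (intro sum_nonneg N_nonneg[OF assms])
    have "(\<Sum>i<k. N (C i ** X ** mat_adj (C i))) = cmod (mat_trace (mat_adj Y ** X))"
      unfolding eq norm_of_real using nn by (rule abs_of_nonneg[symmetric])
    also have "\<dots> \<le> dual_norm N Y * N X" by (rule dual_ineq[OF assms])
    also have "\<dots> \<le> 1 * N X" by (rule mult_right_mono[OF dY N_nonneg[OF assms]])
    finally show "(\<Sum>i<k. N (C i ** X ** mat_adj (C i))) \<le> N X" by simp
  qed
next
  assume L: "is_L_norm N"
  show "C_star_convex {Y. dual_norm N Y \<le> 1}"
    unfolding C_star_convex_def
  proof (intro allI impI, elim conjE)
    fix k :: nat and A C :: "nat \<Rightarrow> 'n cmat"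
    assume hA: "\<forall>i<k. A i \<in> {Y. dual_norm N Y \<le> 1}" and sC: "(\<Sum>i<k. mat_adj (C i) ** C i) = mat 1"
    have "dual_norm N (\<Sum>i<k. mat_adj (C i) ** A i ** C i) \<le> 1"
    proof (rule dual_le1[OF assms])
      fix X :: "'n cmat" assume X: "N X \<le> 1"
      have "cmod (mat_trace (mat_adj (\<Sum>i<k. mat_adj (C i) ** A i ** C i) ** X))
          = cmod (\<Sum>i<k. mat_trace (mat_adj (A i) ** (C i ** X ** mat_adj (C i))))"
        by (simp only: trace_identity)
      also have "\<dots> \<le> (\<Sum>i<k. cmod (mat_trace (mat_adj (A i) ** (C i ** X ** mat_adj (C i)))))"
        by (rule norm_sum)
      also have "\<dots> \<le> (\<Sum>i<k. N (C i ** X ** mat_adj (C i)))"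
      proof (rule sum_mono)
        fix i assume "i \<in> {..<k}"
        then have "dual_norm N (A i) \<le> 1" using hA by simp
        then have "dual_norm N (A i) * N (C i ** X ** mat_adj (C i)) \<le> 1 * N (C i ** X ** mat_adj (C i))"
          by (rule mult_right_mono[OF _ N_nonneg[OF assms]])
        then show "cmod (mat_trace (mat_adj (A i) ** (C i ** X ** mat_adj (C i)))) \<le> N (C i ** X ** mat_adj (C i))"
          using dual_ineq[OF assms, of "A i" "C i ** X ** mat_adj (C i)"] by simp
      qed
      also have "\<dots> \<le> N X" using L sC unfolding is_L_norm_def by blast
      also have "\<dots> \<le> 1" by (rule X)
      finally show "cmod (mat_trace (mat_adj (\<Sum>i<k. mat_adj (C i) ** A i ** C i) ** X)) \<le> 1" .
    qed
    then show "(\<Sum>i<k. mat_adj (C i) ** A i ** C i) \<in> {Y. dual_norm N Y \<le> 1}" by simp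
  qed
qed

end
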